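(* Let $q$ be a prime power. For all positive integers $d,t$ with $d<q$ and $t+1<q$, an optimum $(d,t)$-CDA$((d+1)q^t;q+t-1,q)$ exists. Moreover, if $q\ge4$ is a power of $2$, then an optimum $(d,2)$-CDA$((d+1)q^2;2q+3,q)$ exists for every positive integer $d<q$.
   Context: Consecutive $t$-way interaction in an $N\times k$ array $A=(a_{ij})$ over a $v$-set $V$: $T=\{(i,x_i),\dots,(i+t-1,x_{i+t-1})\}$, $1\le i\le k-t+1$, $x_r\in V$; $\rho(A,T)=\{r: a_{r,j}=x_j\ \forall (j,x_j)\in T\}$, $\rho(A,\mathcal T)=\bigcup_{T\in\mathcal T}\rho(A,T)$. A $(d,t)$-CDA$(N;k,v)$ is an $N\times k$ array over $V$ in which every $t$ consecutive columns contain every $t$-tuple at least once, and such that for every set $\mathcal T$ of exactly $d$ distinct consecutive $t$-way interactions and every consecutive $t$-way interaction $T$: $\rho(A,T)\subseteq\rho(A,\mathcal T)$ iff $T\in\mathcal T$. It is optimum if $N=(d+1)v^t$. *)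

theory Defs
  imports "HOL-Computational_Algebra.Primes"
begin

text \<open>A consecutive t-way interaction {(i,x_i),...,(i+t-1,x_{i+t-1})} is encoded as the pair
(i, [x_i,...,x_{i+t-1}]) with i + t \<le> k (0-indexed columns).\<close>

definition cinteractions :: "nat \<Rightarrow> nat \<Rightarrow> nat \<Rightarrow> (nat \<times> nat list) set" where
  "cinteractions k t v = {(i, xs). i + t \<le> k \<and> length xs = t \<and> set xs \<subseteq> {0..<v}}"

definition rho :: "nat \<Rightarrow> (nat \<Rightarrow> nat \<Rightarrow> nat) \<Rightarrow> nat \<times> nat list \<Rightarrow> nat set" where
  "rho N A T = {r. r < N \<and> (\<forall>j < length (snd T). A r (fst T + j) = snd T ! j)}"

definition rho_set :: "nat \<Rightarrow> (nat \<Rightarrow> nat \<Rightarrow> nat) \<Rightarrow> (nat \<times> nat list) set \<Rightarrow> nat set" where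
  "rho_set N A S = (\<Union>T\<in>S. rho N A T)"

definition is_CDA :: "nat \<Rightarrow> nat \<Rightarrow> nat \<Rightarrow> nat \<Rightarrow> nat \<Rightarrow> (nat \<Rightarrow> nat \<Rightarrow> nat) \<Rightarrow> bool" where
  "is_CDA d t N k v A \<longleftrightarrow>
     (\<forall>r < N. \<forall>j < k. A r j < v) \<and>
     (\<forall>T \<in> cinteractions k t v. rho N A T \<noteq> {}) \<and>
     (\<forall>S. S \<subseteq> cinteractions k t v \<and> card S = d \<longrightarrow>
        (\<forall>T \<in> cinteractions k t v. rho N A T \<subseteq> rho_set N A S \<longleftrightarrow> T \<in> S))"

definition optimum_CDA :: "nat \<Rightarrow> nat \<Rightarrow> nat \<Rightarrow> nat \<Rightarrow> nat \<Rightarrow> (nat \<Rightarrow> nat \<Rightarrow> nat) \<Rightarrow> bool" where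
  "optimum_CDA d t N k v A \<longleftrightarrow> is_CDA d t N k v A \<and> N = (d + 1) * v ^ t"

definition prime_power :: "nat \<Rightarrow> bool" where
  "prime_power q \<longleftrightarrow> (\<exists>p n. prime p \<and> n > 0 \<and> q = p ^ n)"

end

theory Submission
  imports "HOL-Algebra.Algebraic_Closure" "HOL-Number_Theory.Residues" Defs
begin

context cring begin

lemma binomial_thm:
  assumes x: "x \<in> carrier R" and y: "y \<in> carrier R"
  shows "(x \<oplus> y) [^] n = (\<Oplus>k\<in>{..n}. [(n choose k)] \<cdot> (x [^] k \<otimes> y [^] (n - k)))"
proof (induction n)
  case 0 show ?case using x y by simp
next
  case (Suc n)
  define S where "S = (\<Oplus>k\<in>{..n}. [(n choose k)] \<cdot> (x [^] k \<otimes> y [^] (n - k)))"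
  define A where "A = (\<lambda>k. [(n choose k)] \<cdot> (x [^] Suc k \<otimes> y [^] (n - k)))"
  define B where "B = (\<lambda>k. [(n choose Suc k)] \<cdot> (x [^] Suc k \<otimes> y [^] (n - k)))"
  have Ac: "A \<in> {..n} \<rightarrow> carrier R" "\<And>k. A k \<in> carrier R" using x y by (auto simp: A_def)
  have Bc: "B \<in> {..n} \<rightarrow> carrier R" "\<And>k. B k \<in> carrier R" using x y by (auto simp: B_def)
  have Sc: "S \<in> carrier R" unfolding S_def using x y by (auto intro!: finsum_closed)
  have fc: "(\<lambda>k. [(n choose k)] \<cdot> (x [^] k \<otimes> y [^] (n - k))) \<in> {..n} \<rightarrow> carrier R"
    using x y by auto
  have 1: "S \<otimes> x = (\<Oplus>k\<in>{..n}. A k)"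
  proof -
    have "S \<otimes> x = (\<Oplus>k\<in>{..n}. [(n choose k)] \<cdot> (x [^] k \<otimes> y [^] (n - k)) \<otimes> x)"
      unfolding S_def using finsum_ldistr[OF _ x fc] by simp
    also have "\<dots> = (\<Oplus>k\<in>{..n}. A k)"
    proof (rule finsum_cong')
      fix k assume "k \<in> {..n}"
      have "[(n choose k)] \<cdot> (x [^] k \<otimes> y [^] (n - k)) \<otimes> x = [(n choose k)] \<cdot> (x [^] k \<otimes> y [^] (n - k) \<otimes> x)"
        using x y add_pow_ldistr by simp
      also have "x [^] k \<otimes> y [^] (n - k) \<otimes> x = x [^] Suc k \<otimes> y [^] (n - k)"
        using x y by (simp add: m_ac)
      finally show "[(n choose k)] \<cdot> (x [^] k \<otimes> y [^] (n - k)) \<otimes> x = A k" by (simp add: A_def)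
    qed (use Ac in auto)
    finally show ?thesis .
  qed
  have 2: "S \<otimes> y = (\<Oplus>k\<in>{..n}. B k) \<oplus> y [^] Suc n"
  proof -
    define g where "g = (\<lambda>k. [(n choose k)] \<cdot> (x [^] k \<otimes> y [^] (Suc n - k)))"
    have gc: "g \<in> {..Suc n} \<rightarrow> carrier R" using x y by (auto simp: g_def)
    have "S \<otimes> y = (\<Oplus>k\<in>{..n}. [(n choose k)] \<cdot> (x [^] k \<otimes> y [^] (n - k)) \<otimes> y)"
      unfolding S_def using finsum_ldistr[OF _ y fc] by simp
    also have "\<dots> = (\<Oplus>k\<in>{..n}. g k)"
    proof (rule finsum_cong')
      fix k assume "k \<in> {..n}"
      then have "Suc n - k = Suc (n - k)" by auto
      then have "x [^] k \<otimes> y [^] (n - k) \<otimes> y = x [^] k \<otimes> y [^] (Suc n - k)"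
        using x y by (simp add: m_ac)
      then show "[(n choose k)] \<cdot> (x [^] k \<otimes> y [^] (n - k)) \<otimes> y = g k"
        using x y add_pow_ldistr by (simp add: g_def)
    qed (use gc in auto)
    also have "\<dots> = g (Suc n) \<oplus> (\<Oplus>k\<in>{..n}. g k)"
    proof -
      have g0: "g (Suc n) = \<zero>" by (simp add: g_def binomial_eq_0)
      have "(\<Oplus>k\<in>{..n}. g k) \<in> carrier R" using gc by (intro finsum_closed) auto
      then show ?thesis using g0 by simp
    qed
    also have "\<dots> = (\<Oplus>k\<in>{..Suc n}. g k)" using gc by simp
    also have "\<dots> = (\<Oplus>k\<in>{..n}. g (Suc k)) \<oplus> g 0" using finsum_Suc2[OF gc] .
    also have "(\<Oplus>k\<in>{..n}. g (Suc k)) = (\<Oplus>k\<in>{..n}. B k)"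
      by (rule finsum_cong') (use Bc in \<open>auto simp: g_def B_def\<close>)
    finally show ?thesis using y by (simp add: g_def)
  qed
  have "(x \<oplus> y) [^] Suc n = S \<otimes> (x \<oplus> y)" using Suc by (simp add: S_def)
  also have "\<dots> = S \<otimes> x \<oplus> S \<otimes> y" using Sc x y by (simp add: r_distr)
  also have "\<dots> = (\<Oplus>k\<in>{..n}. A k) \<oplus> ((\<Oplus>k\<in>{..n}. B k) \<oplus> y [^] Suc n)" using 1 2 by simp
  also have "\<dots> = (\<Oplus>k\<in>{..n}. A k \<oplus> B k) \<oplus> y [^] Suc n"
    using Ac Bc y by (simp add: finsum_addf a_assoc finsum_closed)
  also have "\<dots> = (\<Oplus>k\<in>{..Suc n}. [(Suc n choose k)] \<cdot> (x [^] k \<otimes> y [^] (Suc n - k)))"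
  proof -
    define h where "h = (\<lambda>k. [(Suc n choose k)] \<cdot> (x [^] k \<otimes> y [^] (Suc n - k)))"
    have hc: "h \<in> {..Suc n} \<rightarrow> carrier R" using x y by (auto simp: h_def)
    have "(\<Oplus>k\<in>{..Suc n}. h k) = (\<Oplus>k\<in>{..n}. h (Suc k)) \<oplus> h 0" using finsum_Suc2[OF hc] .
    also have "(\<Oplus>k\<in>{..n}. h (Suc k)) = (\<Oplus>k\<in>{..n}. A k \<oplus> B k)"
    proof (rule finsum_cong')
      fix k assume "k \<in> {..n}"
      have "h (Suc k) = [((n choose k) + (n choose Suc k))] \<cdot> (x [^] Suc k \<otimes> y [^] (n - k))"
        by (simp add: h_def)
      also have "\<dots> = A k \<oplus> B k" unfolding A_def B_def
        using x y by (simp add: add.nat_pow_mult)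
      finally show "h (Suc k) = A k \<oplus> B k" .
    qed (use Ac Bc in auto)
    finally show ?thesis using y by (simp add: h_def)
  qed
  finally show ?case .
qed

end

context cring begin
lemma charp_mult_zero:
  assumes "[p] \<cdot> \<one> = \<zero>" "z \<in> carrier R" "p dvd (m::nat)"
  shows "[m] \<cdot> z = \<zero>"
proof -
  obtain c where m: "m = p * c" using assms(3) by blast
  have "[p] \<cdot> z = ([p] \<cdot> \<one>) \<otimes> z" using assms(2) add_pow_ldistr[of \<one> z p] by simp
  then have pz: "[p] \<cdot> z = \<zero>" using assms by simp
  have "[m] \<cdot> z = [c] \<cdot> ([p] \<cdot> z)" using assms(2) by (simp add: m add.nat_pow_pow)
  then show ?thesis using pz by simp
qed

lemma freshman:
  fixes p :: nat
  assumes p: "prime p" and ch: "[p] \<cdot> \<one> = \<zero>" and x: "x \<in> carrier R" and y: "y \<in> carrier R"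
  shows "(x \<oplus> y) [^] p = x [^] p \<oplus> y [^] p"
proof -
  define f where "f = (\<lambda>k. [(p choose k)] \<cdot> (x [^] k \<otimes> y [^] (p - k)))"
  have fc: "f \<in> {..Suc m} \<rightarrow> carrier R" for m using x y by (auto simp: f_def)
  define m where "m = p - 2"
  have pm: "p = Suc (Suc m)" using prime_ge_2_nat[OF p] by (simp add: m_def)
  have z: "(\<Oplus>k\<in>{..m}. f (Suc k)) = \<zero>"
  proof (rule add.finprod_one_eqI)
    fix k assume "k \<in> {..m}"
    then have "p dvd (p choose Suc k)" using pm p by (intro dvd_choose_prime) auto
    then show "f (Suc k) = \<zero>" unfolding f_def using x y by (intro charp_mult_zero[OF ch]) auto
  qed
  have "(x \<oplus> y) [^] p = (\<Oplus>k\<in>{..p}. f k)" unfolding f_def by (rule binomial_thm[OF x y])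
  also have "\<dots> = (\<Oplus>k\<in>{..Suc (Suc m)}. f k)" using pm by simp
  also have "\<dots> = f (Suc (Suc m)) \<oplus> (\<Oplus>k\<in>{..Suc m}. f k)" using fc by simp
  also have "(\<Oplus>k\<in>{..Suc m}. f k) = (\<Oplus>k\<in>{..m}. f (Suc k)) \<oplus> f 0" using finsum_Suc2[OF fc] .
  finally show ?thesis using z x y pm by (simp add: f_def)
qed

lemma freshman_pow:
  fixes p :: nat
  assumes p: "prime p" and ch: "[p] \<cdot> \<one> = \<zero>" and x: "x \<in> carrier R" and y: "y \<in> carrier R"
  shows "(x \<oplus> y) [^] (p ^ n) = x [^] (p ^ n) \<oplus> y [^] (p ^ n)"
proof (induction n)
  case 0 then show ?case using x y by (simp add: nat_pow_eone)
next
  case (Suc n)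
  have "(x \<oplus> y) [^] (p ^ Suc n) = ((x \<oplus> y) [^] (p ^ n)) [^] p"
    using x y by (simp add: nat_pow_pow mult.commute)
  also have "\<dots> = (x [^] (p ^ n)) [^] p \<oplus> (y [^] (p ^ n)) [^] p"
    using Suc freshman[OF p ch] x y by simp
  finally show ?case using x y by (simp add: nat_pow_pow mult.commute)
qed

end

lemma (in ring_hom_ring) hom_add_pow_nat:
  assumes "x \<in> carrier R"
  shows "h ([(n::nat)] \<cdot>\<^bsub>R\<^esub> x) = [n] \<cdot>\<^bsub>S\<^esub> h x"
proof (induction n)
  case 0 then show ?case by simp
next
  case (Suc n)
  have "h ([Suc n] \<cdot>\<^bsub>R\<^esub> x) = h ([n] \<cdot>\<^bsub>R\<^esub> x \<oplus>\<^bsub>R\<^esub> x)" by simp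
  also have "\<dots> = h ([n] \<cdot>\<^bsub>R\<^esub> x) \<oplus>\<^bsub>S\<^esub> h x" using assms by (simp add: hom_add)
  finally show ?case using Suc by simp
qed

lemma (in residues) res_add_pow_one: "[(n::nat)] \<cdot> \<one> = int n mod m"
proof (induction n)
  case 0 then show ?case by (simp add: res_zero_eq)
next
  case (Suc n)
  have "[Suc n] \<cdot> \<one> = [n] \<cdot> \<one> \<oplus> \<one>" by simp
  also have "\<dots> = (int n mod m) \<oplus> (1 mod m)" using Suc one_cong by simp
  also have "\<dots> = (int n + 1) mod m" by (simp add: add_cong)
  finally show ?case by (simp add: ac_simps)
qed

context field begin

lemma frob_subfield:
  fixes p :: nat
  assumes p: "prime p" and ch: "[p] \<cdot> \<one> = \<zero>"
  shows "subfield {x \<in> carrier R. x [^] (p ^ n) = x} R"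
proof -
  let ?q = "p ^ n"
  let ?K = "{x \<in> carrier R. x [^] ?q = x}"
  have q0: "?q > 0" using prime_gt_0_nat[OF p] by simp
  have sr: "subring ?K R"
  proof (rule subringI)
    show "?K \<subseteq> carrier R" by auto
    show "\<one> \<in> ?K" by simp
  next
    fix h assume h: "h \<in> ?K"
    then have hc: "h \<in> carrier R" by simp
    have "h [^] ?q \<oplus> (\<ominus> h) [^] ?q = (h \<oplus> \<ominus> h) [^] ?q"
      using freshman_pow[OF p ch hc, of "\<ominus> h" n] hc by simp
    also have "\<dots> = \<zero>" using hc q0 by (simp add: r_neg nat_pow_zero)
    finally have "(\<ominus> h) [^] ?q = \<ominus> (h [^] ?q)" using hc
      by (metis a_inv_closed minus_equality nat_pow_closed a_comm)
    then show "\<ominus> h \<in> ?K" using h by simp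
  next
    fix h1 h2 assume "h1 \<in> ?K" "h2 \<in> ?K"
    then show "h1 \<otimes> h2 \<in> ?K" by (simp add: nat_pow_distrib)
  next
    fix h1 h2 assume "h1 \<in> ?K" "h2 \<in> ?K"
    then show "h1 \<oplus> h2 \<in> ?K" using freshman_pow[OF p ch] by simp
  qed
  show ?thesis
  proof (rule subfieldI'[OF sr])
    fix k assume k: "k \<in> ?K - {\<zero>}"
    then have ku: "k \<in> Units R" using field_Units by auto
    have kc: "k \<in> carrier R" and kq: "k [^] ?q = k" using k by auto
    have ic: "inv k \<in> carrier R" using ku by simp
    have "inv k [^] ?q \<otimes> k = inv k [^] ?q \<otimes> k [^] ?q" using kq by simp
    also have "\<dots> = (inv k \<otimes> k) [^] ?q" using ic kc by (simp add: nat_pow_distrib)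
    also have "\<dots> = \<one>" using ku by simp
    finally have 1: "inv k [^] ?q \<otimes> k = \<one>" .
    have "inv k [^] ?q = inv k [^] ?q \<otimes> (k \<otimes> inv k)" using ku ic by simp
    also have "\<dots> = (inv k [^] ?q \<otimes> k) \<otimes> inv k" using ic kc by (simp add: m_assoc)
    also have "\<dots> = inv k" using 1 ic by simp
    finally show "inv k \<in> ?K" using ic by simp
  qed
qed

end


lemma mset_le1_size:
  assumes "\<And>x. count M x \<le> 1"
  shows "size M = card (set_mset M)"
proof -
  have "M = mset_set (set_mset M)"
  proof (rule multiset_eqI)
    fix x show "count M x = count (mset_set (set_mset M)) x"
    proof (cases "x \<in># M")
      case True
      then have "0 < count M x" by simp
      then have c: "count M x = 1" using assms[of x] by linarith
      show ?thesis using True by (simp add: c count_mset_set)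
    qed (auto simp: count_mset_set not_in_iff)
  qed
  then show ?thesis by (metis size_mset_set)
qed

context algebraically_closed begin

lemma frob_card:
  fixes p :: nat
  assumes p: "prime p" and ch: "[p] \<cdot> \<one> = \<zero>" and n: "n > 0"
  shows "finite {x \<in> carrier L. x [^] (p ^ n) = x} \<and> card {x \<in> carrier L. x [^] (p ^ n) = x} = p ^ n"
proof -
  define q where "q = p ^ n"
  have q2: "q \<ge> 2"
  proof -
    have "p \<ge> 2" using prime_ge_2_nat[OF p] .
    moreover have "p ^ 1 \<le> p ^ n" using n prime_gt_0_nat[OF p] by (intro power_increasing) auto
    ultimately show ?thesis by (simp add: q_def)
  qed
  let ?P = "poly_ring L"
  interpret UP: domain ?P using univ_poly_is_domain[OF carrier_is_subring] .
  have Xc: "X \<in> carrier ?P" using var_closed(1)[OF carrier_is_subring] .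
  define f where "f = X [^]\<^bsub>?P\<^esub> q \<ominus>\<^bsub>?P\<^esub> X"
  have fc: "f \<in> carrier ?P" unfolding f_def using Xc by simp
  have evf: "eval f x = x [^] q \<ominus> x" if x: "x \<in> carrier L" for x
  proof -
    interpret E: ring_hom_cring ?P L "\<lambda>p. eval p x" using eval_cring_hom[OF carrier_is_subring x] .
    show ?thesis unfolding f_def using Xc x by (simp add: E.ring.hom_nat_pow eval_var)
  qed
  have degf: "degree f = q"
  proof -
    have m: "X [^]\<^bsub>?P\<^esub> q = monom \<one> q" using unitary_monom_eq_var_pow[OF carrier_is_subring] by simp
    have mp: "polynomial (carrier L) (monom \<one> q)" using carrier_is_subring by (intro monom_is_polynomial) auto
    have iX: "\<ominus>\<^bsub>?P\<^esub> X \<in> carrier ?P" using Xc by simp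
    then have iXp: "polynomial (carrier L) (\<ominus>\<^bsub>?P\<^esub> X)" by (simp add: univ_poly_carrier)
    have d1: "degree (\<ominus>\<^bsub>?P\<^esub> X) = 1" using univ_poly_a_inv_degree[OF carrier_is_subring Xc] by (simp add: var_def)
    have dm: "degree (monom \<one> q) = q" by (simp add: monom_def)
    have "f = poly_add (monom \<one> q) (\<ominus>\<^bsub>?P\<^esub> X)"
      unfolding f_def a_minus_def m by (simp add: univ_poly_add)
    then show ?thesis using poly_add_degree_eq[OF carrier_is_subring mp iXp] d1 dm q2 by simp
  qed
  have fne: "f \<noteq> []" using degf q2 by auto
  have spl: "size (roots f) = q" using roots_over_carrier[OF fc] degf unfolding splitted_def by simp
  have sep: "alg_mult f a \<le> 1" for a
  proof (rule ccontr)
    assume "\<not> alg_mult f a \<le> 1"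
    then have am: "2 \<le> alg_mult f a" by simp
    then have a: "a \<in> carrier L" unfolding alg_mult_def by (auto split: if_splits)
    have "0 < alg_mult f a" using am by simp
    then have "is_root f a" using alg_mult_gt_zero_iff_is_root[OF fc] by blast
    then have "a [^] q \<ominus> a = \<zero>" using evf[OF a] unfolding is_root_def by simp
    then have aq: "a [^] q = a" using a by simp
    define u where "u = [\<one>, \<ominus> a]"
    have uc: "u \<in> carrier ?P" unfolding u_def univ_poly_carrier[symmetric] polynomial_def using a by auto
    have une: "u \<noteq> \<zero>\<^bsub>?P\<^esub>" by (simp add: u_def univ_poly_zero)
    obtain g where gc: "g \<in> carrier ?P" and fg: "f = (u [^]\<^bsub>?P\<^esub> (2::nat)) \<otimes>\<^bsub>?P\<^esub> g"
      using le_alg_mult_imp_pdivides[OF a fc am] unfolding pdivides_def factor_def u_def by blast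
    interpret H: ring_hom_ring L ?P poly_of_const
      using canonical_embedding_ring_hom[OF carrier_is_subring] by simp
    define c where "c = poly_of_const a"
    have cc: "c \<in> carrier ?P" unfolding c_def using a by simp
    have Xeq: "X = u \<oplus>\<^bsub>?P\<^esub> c"
    proof (cases "a = \<zero>")
      case True
      then show ?thesis by (simp add: u_def c_def poly_of_const_def var_def univ_poly_add)
    next
      case False
      then show ?thesis using a by (simp add: u_def c_def poly_of_const_def var_def univ_poly_add l_neg)
    qed
    have chP: "[p] \<cdot>\<^bsub>?P\<^esub> \<one>\<^bsub>?P\<^esub> = \<zero>\<^bsub>?P\<^esub>"
    proof -
      have "[p] \<cdot>\<^bsub>?P\<^esub> \<one>\<^bsub>?P\<^esub> = [p] \<cdot>\<^bsub>?P\<^esub> poly_of_const \<one>" by simp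
      also have "\<dots> = poly_of_const ([p] \<cdot> \<one>)" using H.hom_add_pow_nat[of \<one> p] by simp
      finally show ?thesis using ch by simp
    qed
    have cq: "c [^]\<^bsub>?P\<^esub> q = c" unfolding c_def using a aq by (simp flip: H.hom_nat_pow)
    have "X [^]\<^bsub>?P\<^esub> q = u [^]\<^bsub>?P\<^esub> q \<oplus>\<^bsub>?P\<^esub> c"
      unfolding Xeq q_def using UP.freshman_pow[OF p chP uc cc] cq q_def by simp
    then have "f = u [^]\<^bsub>?P\<^esub> q \<ominus>\<^bsub>?P\<^esub> u"
      unfolding f_def using uc cc Xeq by (simp add: UP.minus_add UP.a_ac UP.minus_eq UP.r_neg2)
    also have "u [^]\<^bsub>?P\<^esub> q = u \<otimes>\<^bsub>?P\<^esub> u [^]\<^bsub>?P\<^esub> (q - 1)"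
      using q2 uc by (metis Suc_diff_1 UP.nat_pow_Suc2 less_le_trans pos2)
    finally have "f = u \<otimes>\<^bsub>?P\<^esub> (u [^]\<^bsub>?P\<^esub> (q - 1) \<ominus>\<^bsub>?P\<^esub> \<one>\<^bsub>?P\<^esub>)"
      using uc by (simp add: UP.r_distr UP.minus_eq UP.r_minus)
    moreover have "f = u \<otimes>\<^bsub>?P\<^esub> (u \<otimes>\<^bsub>?P\<^esub> g)"
      using fg uc gc by (simp add: numeral_2_eq_2 UP.m_assoc)
    ultimately have eq: "u \<otimes>\<^bsub>?P\<^esub> g = u [^]\<^bsub>?P\<^esub> (q - 1) \<ominus>\<^bsub>?P\<^esub> \<one>\<^bsub>?P\<^esub>"
      using UP.m_lcancel[OF une uc] uc gc by simp
    interpret E: ring_hom_cring ?P L "\<lambda>p. eval p a" using eval_cring_hom[OF carrier_is_subring a] .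
    have eu: "eval u a = \<zero>" using a by (simp add: u_def r_neg)
    have "eval (u \<otimes>\<^bsub>?P\<^esub> g) a = \<zero>" using uc gc eu by simp
    moreover have "eval (u [^]\<^bsub>?P\<^esub> (q - 1) \<ominus>\<^bsub>?P\<^esub> \<one>\<^bsub>?P\<^esub>) a = \<ominus> \<one>"
      using uc eu q2 by (simp add: E.ring.hom_nat_pow nat_pow_zero minus_eq)
    ultimately have "\<ominus> \<one> = \<zero>" using eq by simp
    then show False by (metis a_inv_closed minus_minus minus_zero one_closed one_not_zero)
  qed
  have K: "{x \<in> carrier L. x [^] q = x} = set_mset (roots f)"
  proof -
    have "x \<in># roots f \<longleftrightarrow> x \<in> carrier L \<and> x [^] q = x" for x
      using roots_mem_iff_is_root[OF fc] evf fne unfolding is_root_def by auto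
    then show ?thesis by auto
  qed
  have "size (roots f) = card (set_mset (roots f))"
    using sep alg_mult_eq_count_roots[OF fc] by (intro mset_le1_size) metis
  then show ?thesis using K spl q_def by simp
qed

end

lemma GF_exists:
  fixes p n :: nat assumes p: "prime p" and n: "n > 0"
  shows "\<exists>F :: ((int list \<times> nat) multiset \<Rightarrow> int) ring. field F \<and> finite (carrier F) \<and>
           card (carrier F) = p ^ n \<and> [p] \<cdot>\<^bsub>F\<^esub> \<one>\<^bsub>F\<^esub> = \<zero>\<^bsub>F\<^esub>"
proof -
  interpret Z: residues_prime p "residue_ring (int p)" using p by unfold_locales (assumption, rule reflexive)
  define Z where "Z = residue_ring (int p)"
  have fZ: "field Z" unfolding Z_def by (rule Z.is_field)
  define L where "L = field.alg_closure Z"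
  have ac: "algebraic_closure L (ring.indexed_const Z ` carrier Z)" unfolding L_def
    using field.alg_closureE(1)[OF fZ] .
  interpret L: algebraic_closure L "ring.indexed_const Z ` carrier Z" by (rule ac)
  have hom: "ring.indexed_const Z \<in> ring_hom Z L" unfolding L_def using field.alg_closureE(2)[OF fZ] .
  interpret H: ring_hom_ring Z L "ring.indexed_const Z"
    using ring_hom_ringI2[OF field.is_ring[OF fZ] L.ring_axioms hom] .
  have chZ: "[p] \<cdot>\<^bsub>Z\<^esub> \<one>\<^bsub>Z\<^esub> = \<zero>\<^bsub>Z\<^esub>" unfolding Z_def using Z.res_add_pow_one[of p] Z.res_zero_eq by simp
  have chL: "[p] \<cdot>\<^bsub>L\<^esub> \<one>\<^bsub>L\<^esub> = \<zero>\<^bsub>L\<^esub>"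
    using H.hom_add_pow_nat[of "\<one>\<^bsub>Z\<^esub>" p] chZ by simp
  define K where "K = {x \<in> carrier L. x [^]\<^bsub>L\<^esub> (p ^ n) = x}"
  have sf: "subfield K L" unfolding K_def by (rule L.frob_subfield[OF p chL])
  have fin: "finite K \<and> card K = p ^ n" unfolding K_def by (rule L.frob_card[OF p chL n])
  define F where "F = L\<lparr>carrier := K\<rparr>"
  have "field F" unfolding F_def using L.subfield_iff(2)[OF sf] .
  moreover have "[p] \<cdot>\<^bsub>F\<^esub> \<one>\<^bsub>F\<^esub> = \<zero>\<^bsub>F\<^esub>"
    using chL unfolding F_def by (simp add: add_pow_def nat_pow_def)
  ultimately show ?thesis using fin unfolding F_def by (intro exI[of _ F]) (simp add: F_def)
qed

lemma cint_finite: "finite (cinteractions k t v)"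
proof -
  have "cinteractions k t v \<subseteq> {..k} \<times> {xs. set xs \<subseteq> {0..<v} \<and> length xs = t}"
    unfolding cinteractions_def by auto
  moreover have "finite ({..k} \<times> {xs. set xs \<subseteq> {0..<v} \<and> length xs = t})"
    by (intro finite_cartesian_product finite_lists_length_eq) auto
  ultimately show ?thesis by (rule finite_subset)
qed

lemma rho_finite: "finite (rho N A T)"
  unfolding rho_def by auto

lemma core_CDA:
  assumes vals: "\<forall>r < N. \<forall>j < k. A r j < v"
    and cover: "\<forall>T \<in> cinteractions k t v. d + 1 \<le> card (rho N A T)"
    and agree: "\<And>i i' r1 r2. i < i' \<Longrightarrow> i' + t \<le> k \<Longrightarrow> r1 < N \<Longrightarrow> r2 < N \<Longrightarrow>
        (\<And>j. (i \<le> j \<and> j < i + t) \<or> (i' \<le> j \<and> j < i' + t) \<Longrightarrow> A r1 j = A r2 j) \<Longrightarrow> r1 = r2"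
  shows "is_CDA d t N k v A"
proof -
  have sep: "card (rho N A T \<inter> rho N A T') \<le> 1"
    if T: "T \<in> cinteractions k t v" and T': "T' \<in> cinteractions k t v" and ne: "T \<noteq> T'" for T T'
  proof -
    obtain i xs where Ti: "T = (i, xs)" by force
    obtain i' xs' where Ti': "T' = (i', xs')" by force
    have lx: "length xs = t" "length xs' = t" "i + t \<le> k" "i' + t \<le> k"
      using T T' Ti Ti' unfolding cinteractions_def by auto
    have all: "\<forall>r1 \<in> rho N A T \<inter> rho N A T'. \<forall>r2 \<in> rho N A T \<inter> rho N A T'. r1 = r2"
    proof (intro ballI)
      fix r1 r2 assume r1: "r1 \<in> rho N A T \<inter> rho N A T'" and r2: "r2 \<in> rho N A T \<inter> rho N A T'"
      have h1: "A r (i + j) = xs ! j" if "r \<in> {r1, r2}" "j < t" for r j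
        using that r1 r2 lx unfolding rho_def Ti by auto
      have h2: "A r (i' + j) = xs' ! j" if "r \<in> {r1, r2}" "j < t" for r j
        using that r1 r2 lx unfolding rho_def Ti' by auto
      have N: "r1 < N" "r2 < N" using r1 r2 unfolding rho_def by auto
      show "r1 = r2"
      proof (cases "i = i'")
        case True
        have "xs = xs'"
        proof (rule nth_equalityI)
          show "length xs = length xs'" using lx by simp
          fix j assume "j < length xs"
          then show "xs ! j = xs' ! j" using h1[of r1 j] h2[of r1 j] True lx by simp
        qed
        then show ?thesis using ne Ti Ti' True by simp
      next
        case False
        have ag: "A r1 j = A r2 j" if "(i \<le> j \<and> j < i + t) \<or> (i' \<le> j \<and> j < i' + t)" for j
        proof (cases "i \<le> j \<and> j < i + t")
          case True
          then obtain j0 where "j = i + j0" "j0 < t" by (metis add_diff_inverse_nat add_less_cancel_left not_le)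
          then show ?thesis using h1[of r1 j0] h1[of r2 j0] by simp
        next
          case False
          then have "i' \<le> j \<and> j < i' + t" using that by blast
          then obtain j0 where "j = i' + j0" "j0 < t" by (metis add_diff_inverse_nat add_less_cancel_left not_le)
          then show ?thesis using h2[of r1 j0] h2[of r2 j0] by simp
        qed
        show ?thesis
        proof (cases "i < i'")
          case True
          then show ?thesis using agree[OF True lx(4) N] ag by blast
        next
          case c: False
          then have "i' < i" using False by simp
          then show ?thesis using agree[OF _ lx(3) N] ag by blast
        qed
      qed
    qed
    show ?thesis using all rho_finite by (simp add: card_le_Suc0_iff_eq)
  qed
  show ?thesis unfolding is_CDA_def
  proof (intro conjI allI impI ballI)
    fix r j assume "r < N" "j < k" then show "A r j < v" using vals by blast
  next
    fix T assume "T \<in> cinteractions k t v"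
    then have "1 \<le> card (rho N A T)" using cover by fastforce
    then show "rho N A T \<noteq> {}" by auto
  next
    fix S T assume S: "S \<subseteq> cinteractions k t v \<and> card S = d" and T: "T \<in> cinteractions k t v"
    have finS: "finite S" using S cint_finite finite_subset by blast
    show "rho N A T \<subseteq> rho_set N A S \<longleftrightarrow> T \<in> S"
    proof
      assume sub: "rho N A T \<subseteq> rho_set N A S"
      show "T \<in> S"
      proof (rule ccontr)
        assume nT: "T \<notin> S"
        have "rho N A T = (\<Union>T'\<in>S. rho N A T \<inter> rho N A T')"
          using sub unfolding rho_set_def by auto
        then have "card (rho N A T) \<le> (\<Sum>T'\<in>S. card (rho N A T \<inter> rho N A T'))"
          by (metis card_UN_le finS)
        also have "\<dots> \<le> (\<Sum>T'\<in>S. 1)"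
          using S T nT by (intro sum_mono sep) auto
        also have "\<dots> = d" using S by simp
        finally show False using cover T by fastforce
      qed
    next
      assume "T \<in> S"
      then show "rho N A T \<subseteq> rho_set N A S" unfolding rho_set_def by auto
    qed
  qed
qed


lemma card_set_mset_le_size: "card (set_mset M) \<le> size M"
  by (induction M) (auto simp: card_insert_if)

context field begin

lemma eval_cons': "eval (a # l) x = a \<otimes> x [^] length l \<oplus> eval l x"
  by simp

lemma eval_diff:
  assumes "length l1 = length l2" "set l1 \<subseteq> carrier R" "set l2 \<subseteq> carrier R" "x \<in> carrier R"
  shows "eval (map2 (\<lambda>a b. a \<ominus> b) l1 l2) x = eval l1 x \<ominus> eval l2 x"
  using assms
proof (induction l1 l2 rule: list_induct2)
  case Nil then show ?case by (simp add: minus_eq)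
next
  case (Cons a l1 b l2)
  have e1: "eval l1 x \<in> carrier R" "eval l2 x \<in> carrier R" using Cons by (auto intro: eval_in_carrier)
  have "eval (map2 (\<lambda>a b. a \<ominus> b) (a # l1) (b # l2)) x = (a \<ominus> b) \<otimes> x [^] length l1 \<oplus> (eval l1 x \<ominus> eval l2 x)"
    using Cons by simp
  also have "\<dots> = (a \<otimes> x [^] length l1 \<oplus> eval l1 x) \<ominus> (b \<otimes> x [^] length l2 \<oplus> eval l2 x)"
  proof -
    have ab: "a \<in> carrier R" "b \<in> carrier R" "x [^] length l1 \<in> carrier R" using Cons by auto
    show ?thesis using ab e1 Cons(1) by algebra
  qed
  finally show ?case by simp
qed

lemma root_zero:
  assumes l: "set l \<subseteq> carrier R" and Xs: "finite Xs" "Xs \<subseteq> carrier R" and len: "length l \<le> card Xs"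
    and z: "\<And>x. x \<in> Xs \<Longrightarrow> eval l x = \<zero>"
  shows "set l \<subseteq> {\<zero>}"
proof -
  define p where "p = normalize l"
  have pc: "p \<in> carrier (poly_ring R)" unfolding p_def univ_poly_carrier[symmetric]
    using normalize_gives_polynomial[OF l] .
  have ep: "eval p x = \<zero>" if "x \<in> Xs" for x using z[OF that] eval_normalize[OF l] Xs that p_def by auto
  have "p = []"
  proof (rule ccontr)
    assume pne: "p \<noteq> []"
    have "Xs \<subseteq> set_mset (roots p)"
      using roots_mem_iff_is_root[OF pc] ep pne Xs unfolding is_root_def by auto
    then have "card Xs \<le> card (set_mset (roots p))" by (intro card_mono) auto
    also have "\<dots> \<le> size (roots p)" by (rule card_set_mset_le_size)
    also have "\<dots> \<le> degree p" by (rule size_roots_le_degree[OF pc])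
    also have "\<dots> < length l" using normalize_length_le[of l] pne unfolding p_def by (cases l) auto
    finally show False using len by simp
  qed
  then have "l = replicate (length l) \<zero>" using normalize_trick[of l] unfolding p_def by simp
  moreover have "set (replicate (length l) \<zero>) \<subseteq> {\<zero>}" by auto
  ultimately show ?thesis by metis
qed

lemma eval_inj:
  assumes "length l1 = length l2" "set l1 \<subseteq> carrier R" "set l2 \<subseteq> carrier R"
    and Xs: "finite Xs" "Xs \<subseteq> carrier R" and len: "length l1 \<le> card Xs"
    and e: "\<And>x. x \<in> Xs \<Longrightarrow> eval l1 x = eval l2 x"
  shows "l1 = l2"
proof -
  let ?d = "map2 (\<lambda>a b. a \<ominus> b) l1 l2"
  have dc: "set ?d \<subseteq> carrier R" using assms(1-3) by (auto dest!: set_zip_leftD set_zip_rightD elim!: in_set_zipE)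
  have "set ?d \<subseteq> {\<zero>}"
  proof (rule root_zero[OF dc Xs])
    show "length ?d \<le> card Xs" using len assms(1) by simp
    fix x assume x: "x \<in> Xs"
    then have xc: "x \<in> carrier R" using Xs by auto
    have "eval l2 x \<in> carrier R" by (rule eval_in_carrier[OF assms(3) xc])
    then show "eval ?d x = \<zero>" using eval_diff[OF assms(1-3) xc] e[OF x] by simp
  qed
  show ?thesis
  proof (rule nth_equalityI)
    show "length l1 = length l2" by fact
    fix i assume i: "i < length l1"
    then have "?d ! i \<in> set ?d" using assms(1) by (intro nth_mem) simp
    then have "l1 ! i \<ominus> l2 ! i = \<zero>" using \<open>set ?d \<subseteq> {\<zero>}\<close> i assms(1) by auto
    moreover have "l1 ! i \<in> carrier R" "l2 ! i \<in> carrier R" using i assms(1-3) by (auto intro!: nth_mem[THEN subsetD[rotated]])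
    ultimately show "l1 ! i = l2 ! i" by simp
  qed
qed

end

context field begin

definition pval :: "'a list \<Rightarrow> 'a option \<Rightarrow> 'a" where
  "pval l P = (case P of None \<Rightarrow> l ! 1 | Some x \<Rightarrow> eval l x)"

lemma assembly:
  fixes enc :: "'a \<Rightarrow> nat" and C :: "'a set" and pt :: "nat \<Rightarrow> 'a option" and d t k q :: nat
  assumes fin: "finite (carrier R)"
    and enc: "bij_betw enc (carrier R) {0..<q}"
    and C: "C \<subseteq> carrier R" "card C = d + 1"
    and t: "t > 0"
    and ptc: "\<And>j x. pt j = Some x \<Longrightarrow> x \<in> carrier R"
    and PWI: "\<And>i c g1 g2. i + t \<le> k \<Longrightarrow> c \<in> C \<Longrightarrow> set g1 \<subseteq> carrier R \<Longrightarrow> length g1 = t \<Longrightarrow>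
        set g2 \<subseteq> carrier R \<Longrightarrow> length g2 = t \<Longrightarrow>
        (\<And>m. m < t \<Longrightarrow> pval (c # g1) (pt (i + m)) = pval (c # g2) (pt (i + m))) \<Longrightarrow> g1 = g2"
    and PA: "\<And>i i' l1 l2. i < i' \<Longrightarrow> i' + t \<le> k \<Longrightarrow>
        l1 \<in> {c # g | c g. c \<in> C \<and> set g \<subseteq> carrier R \<and> length g = t} \<Longrightarrow>
        l2 \<in> {c # g | c g. c \<in> C \<and> set g \<subseteq> carrier R \<and> length g = t} \<Longrightarrow>
        (\<And>j. (i \<le> j \<and> j < i + t) \<or> (i' \<le> j \<and> j < i' + t) \<Longrightarrow> pval l1 (pt j) = pval l2 (pt j)) \<Longrightarrow> l1 = l2"
  shows "\<exists>A. optimum_CDA d t ((d + 1) * q ^ t) k q A"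
proof -
  define LT where "LT = {g. set g \<subseteq> carrier R \<and> length g = t}"
  define RW where "RW = {c # g | c g. c \<in> C \<and> set g \<subseteq> carrier R \<and> length g = t}"
  define N where "N = (d + 1) * q ^ t"
  have q: "card (carrier R) = q" using bij_betw_same_card[OF enc] by simp
  have finLT: "finite LT" unfolding LT_def using fin by (intro finite_lists_length_eq)
  have cardLT: "card LT = q ^ t" unfolding LT_def using card_lists_length_eq[OF fin] q by simp
  have RWi: "RW = (\<lambda>(c, g). c # g) ` (C \<times> LT)" unfolding RW_def LT_def by auto
  have inj: "inj_on (\<lambda>(c, g). c # g) (C \<times> LT)" by (auto simp: inj_on_def)
  have finC: "finite C" using C fin finite_subset by blast
  have cardRW: "card RW = N" unfolding RWi N_def
    using card_image[OF inj] C cardLT by (simp add: card_cartesian_product)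
  have finRW: "finite RW" unfolding RWi using finC finLT by simp
  obtain rowf where rowf: "bij_betw rowf {0..<N} RW"
    using ex_bij_betw_nat_finite[OF finRW] cardRW by auto
  have RWc: "set l \<subseteq> carrier R" "length l = Suc t" if "l \<in> RW" for l
    using that C unfolding RW_def by auto
  have pvc: "pval l (pt j) \<in> carrier R" if "l \<in> RW" for l j
  proof (cases "pt j")
    case None
    have "l ! 1 \<in> set l" using RWc[OF that] t by (intro nth_mem) simp
    then show ?thesis using None RWc[OF that] unfolding pval_def by auto
  next
    case (Some x)
    then show ?thesis using ptc[OF Some] RWc[OF that] unfolding pval_def by (auto intro: eval_in_carrier)
  qed
  define A where "A = (\<lambda>r j. enc (pval (rowf r) (pt j)))"
  have rowRW: "rowf r \<in> RW" if "r < N" for r using rowf that unfolding bij_betw_def by auto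
  have encc: "enc x < q" if "x \<in> carrier R" for x using enc that unfolding bij_betw_def by auto
  have encinj: "inj_on enc (carrier R)" using enc unfolding bij_betw_def by auto
  define dec where "dec = the_inv_into (carrier R) enc"
  have dec: "dec y \<in> carrier R" "enc (dec y) = y" if "y < q" for y
    using that enc unfolding dec_def
    by (auto intro: the_inv_into_into[OF encinj] f_the_inv_into_f_bij_betw simp: bij_betw_def)
  have "is_CDA d t N k q A"
  proof (rule core_CDA)
    show "\<forall>r < N. \<forall>j < k. A r j < q" unfolding A_def using encc pvc rowRW by auto
  next
    show "\<forall>T \<in> cinteractions k t q. d + 1 \<le> card (rho N A T)"
    proof
      fix T assume T: "T \<in> cinteractions k t q"
      obtain i xs where Ti: "T = (i, xs)" by force
      have it: "i + t \<le> k" and lx: "length xs = t" and sx: "set xs \<subseteq> {0..<q}"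
        using T Ti unfolding cinteractions_def by auto
      define ys where "ys = map dec xs"
      have ys: "ys \<in> LT" unfolding LT_def ys_def using dec sx lx by auto
      have ex: "\<exists>g \<in> LT. map (\<lambda>m. pval (c # g) (pt (i + m))) [0..<t] = ys" if c: "c \<in> C" for c
      proof -
        define \<Phi> where "\<Phi> = (\<lambda>g. map (\<lambda>m. pval (c # g) (pt (i + m))) [0..<t])"
        have sub: "\<Phi> ` LT \<subseteq> LT"
        proof
          fix y assume "y \<in> \<Phi> ` LT"
          then obtain g where g: "g \<in> LT" "y = \<Phi> g" by auto
          have "c # g \<in> RW" using g c unfolding RW_def LT_def by auto
          then show "y \<in> LT" using g pvc unfolding LT_def \<Phi>_def by auto
        qed
        have "inj_on \<Phi> LT"
        proof (rule inj_onI)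
          fix g1 g2 assume g1: "g1 \<in> LT" and g2: "g2 \<in> LT" and e: "\<Phi> g1 = \<Phi> g2"
          show "g1 = g2"
          proof (rule PWI[OF it c])
            fix m assume m: "m < t"
            have "\<Phi> g1 ! m = \<Phi> g2 ! m" using e by simp
            then show "pval (c # g1) (pt (i + m)) = pval (c # g2) (pt (i + m))"
              using m unfolding \<Phi>_def by simp
          qed (use g1 g2 in \<open>auto simp: LT_def\<close>)
        qed
        then have "\<Phi> ` LT = LT" using endo_inj_surj[OF finLT sub] by simp
        then obtain g where "g \<in> LT" "ys = \<Phi> g" using ys by blast
        then show ?thesis unfolding \<Phi>_def by blast
      qed
      define gc where "gc = (\<lambda>c. SOME g. g \<in> LT \<and> map (\<lambda>m. pval (c # g) (pt (i + m))) [0..<t] = ys)"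
      have gc: "gc c \<in> LT" "map (\<lambda>m. pval (c # gc c) (pt (i + m))) [0..<t] = ys" if "c \<in> C" for c
        using someI_ex[OF ex[OF that, unfolded Bex_def]] unfolding gc_def by auto
      define \<phi> where "\<phi> = (\<lambda>c. the_inv_into {0..<N} rowf (c # gc c))"
      have inRW: "c # gc c \<in> RW" if "c \<in> C" for c using gc(1)[OF that] that unfolding RW_def LT_def by auto
      have rinj: "inj_on rowf {0..<N}" using rowf unfolding bij_betw_def by auto
      have phi: "\<phi> c < N" "rowf (\<phi> c) = c # gc c" if "c \<in> C" for c
      proof -
        have rw: "c # gc c \<in> rowf ` {0..<N}" using inRW[OF that] rowf unfolding bij_betw_def by auto
        show "\<phi> c < N" using the_inv_into_into[OF rinj rw subset_refl] unfolding \<phi>_def by simp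
        show "rowf (\<phi> c) = c # gc c" using f_the_inv_into_f[OF rinj rw] unfolding \<phi>_def .
      qed
      have "\<phi> ` C \<subseteq> rho N A T"
      proof
        fix r assume "r \<in> \<phi> ` C"
        then obtain c where c: "c \<in> C" "r = \<phi> c" by auto
        have "A r (i + j) = xs ! j" if j: "j < t" for j
        proof -
          have "pval (c # gc c) (pt (i + j)) = ys ! j"
            using arg_cong[OF gc(2)[OF c(1)], of "\<lambda>l. l ! j"] j by simp
          then show ?thesis unfolding A_def using phi[OF c(1)] c j lx sx dec unfolding ys_def
            by (auto simp: subset_iff)
        qed
        then show "r \<in> rho N A T" unfolding rho_def Ti using phi c lx by auto
      qed
      moreover have "inj_on \<phi> C"
      proof (rule inj_onI)
        fix c1 c2 assume "c1 \<in> C" "c2 \<in> C" "\<phi> c1 = \<phi> c2"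
        then show "c1 = c2" using phi by (metis list.inject)
      qed
      ultimately have "card C \<le> card (rho N A T)"
        using rho_finite by (metis card_image card_mono)
      then show "d + 1 \<le> card (rho N A T)" using C by simp
    qed
  next
    fix i i' r1 r2
    assume ii: "i < i'" "i' + t \<le> k" and r: "r1 < N" "r2 < N"
      and ag: "\<And>j. (i \<le> j \<and> j < i + t) \<or> (i' \<le> j \<and> j < i' + t) \<Longrightarrow> A r1 j = A r2 j"
    have "rowf r1 = rowf r2"
    proof (rule PA[OF ii])
      show "rowf r1 \<in> {c # g | c g. c \<in> C \<and> set g \<subseteq> carrier R \<and> length g = t}"
        using rowRW[OF r(1)] unfolding RW_def .
      show "rowf r2 \<in> {c # g | c g. c \<in> C \<and> set g \<subseteq> carrier R \<and> length g = t}"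
        using rowRW[OF r(2)] unfolding RW_def .
      fix j assume j: "(i \<le> j \<and> j < i + t) \<or> (i' \<le> j \<and> j < i' + t)"
      show "pval (rowf r1) (pt j) = pval (rowf r2) (pt j)"
        using ag[OF j] encinj pvc rowRW r unfolding A_def inj_on_def by blast
    qed
    then show "r1 = r2" using rowf r unfolding bij_betw_def inj_on_def by auto
  qed
  then show ?thesis unfolding optimum_CDA_def N_def by blast
qed

end

lemma mod_inj_window:
  fixes a b q :: nat
  assumes "a < b" "b < a + q" "a mod q = b mod q"
  shows False
proof -
  have "b mod q = a mod q" using assms(3) by simp
  then have "q dvd (b - a)" using mod_eq_dvd_iff_nat[of a b q] assms(1) by simp
  moreover have "0 < b - a" "b - a < q" using assms by auto
  ultimately show False using nat_dvd_not_less by blast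
qed

context field begin

lemma eval_cons_cancel:
  assumes "c \<in> carrier R" "set g1 \<subseteq> carrier R" "set g2 \<subseteq> carrier R" "length g1 = length g2" "x \<in> carrier R"
    and "eval (c # g1) x = eval (c # g2) x"
  shows "eval g1 x = eval g2 x"
proof -
  have "c \<otimes> x [^] length g1 \<oplus> eval g1 x = c \<otimes> x [^] length g1 \<oplus> eval g2 x"
    using assms by simp
  moreover have "c \<otimes> x [^] length g1 \<in> carrier R" "eval g1 x \<in> carrier R" "eval g2 x \<in> carrier R"
    using assms by (auto intro: eval_in_carrier)
  ultimately show ?thesis by (metis add.l_cancel)
qed

lemma part1:
  fixes q d t :: nat
  assumes fin: "finite (carrier R)" and q: "card (carrier R) = q"
    and d: "d < q" and t: "0 < t" "t + 1 < q"
  shows "\<exists>A. optimum_CDA d t ((d + 1) * q ^ t) (q + t - 1) q A"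
proof -
  obtain h where h: "bij_betw h {0..<q} (carrier R)" using ex_bij_betw_nat_finite[OF fin] q by auto
  define enc where "enc = the_inv_into {0..<q} h"
  have enc: "bij_betw enc (carrier R) {0..<q}" unfolding enc_def by (rule bij_betw_the_inv_into[OF h])
  have hinj: "inj_on h {0..<q}" using h unfolding bij_betw_def by auto
  have hc: "h y \<in> carrier R" if "y < q" for y using h that unfolding bij_betw_def by auto
  have q0: "0 < q" using t by simp
  define C where "C = h ` {0..d}"
  have C: "C \<subseteq> carrier R" "card C = d + 1"
  proof -
    show "C \<subseteq> carrier R" unfolding C_def using hc d by auto
    have "inj_on h {0..d}" by (rule inj_on_subset[OF hinj]) (use d in auto)
    then show "card C = d + 1" unfolding C_def by (simp add: card_image)
  qed
  define pt where "pt = (\<lambda>j. Some (h (j mod q)))"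
  define k where "k = q + t - 1"
  have ptc: "\<And>j x. pt j = Some x \<Longrightarrow> x \<in> carrier R" unfolding pt_def using hc q0 by auto
  have "\<exists>A. optimum_CDA d t ((d + 1) * q ^ t) k q A"
  proof (rule assembly[OF fin enc C t(1) ptc])
    fix i c g1 g2
    assume it: "i + t \<le> k" and c: "c \<in> C" and g1: "set g1 \<subseteq> carrier R" "length g1 = t"
      and g2: "set g2 \<subseteq> carrier R" "length g2 = t"
      and e: "\<And>m. m < t \<Longrightarrow> pval (c # g1) (pt (i + m)) = pval (c # g2) (pt (i + m))"
    define Xs where "Xs = (\<lambda>m. h ((i + m) mod q)) ` {0..<t}"
    have inj: "inj_on (\<lambda>m. h ((i + m) mod q)) {0..<t}"
    proof (rule inj_onI)
      fix m1 m2 assume m: "m1 \<in> {0..<t}" "m2 \<in> {0..<t}" and eq: "h ((i + m1) mod q) = h ((i + m2) mod q)"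
      then have "(i + m1) mod q = (i + m2) mod q" using hinj q0 unfolding inj_on_def by auto
      then have eqm: "(i + m1) mod q = (i + m2) mod q" .
      show "m1 = m2"
      proof (rule ccontr)
        assume "m1 \<noteq> m2"
        then have "m1 < m2 \<or> m2 < m1" by auto
        then show False
        proof
          assume "m1 < m2" then show False using mod_inj_window[of "i + m1" "i + m2" q] m t eqm by auto
        next
          assume "m2 < m1" then show False using mod_inj_window[of "i + m2" "i + m1" q] m t eqm by auto
        qed
      qed
    qed
    have cardX: "card Xs = t" unfolding Xs_def using card_image[OF inj] by simp
    have Xc: "Xs \<subseteq> carrier R" unfolding Xs_def using hc q0 by auto
    show "g1 = g2"
    proof (rule eval_inj[OF _ g1(1) g2(1) _ Xc])
      show "length g1 = length g2" using g1 g2 by simp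
      show "finite Xs" unfolding Xs_def by simp
      show "length g1 \<le> card Xs" using cardX g1 by simp
      fix x assume "x \<in> Xs"
      then obtain m where m: "m < t" "x = h ((i + m) mod q)" unfolding Xs_def by auto
      have "eval (c # g1) x = eval (c # g2) x" using e[OF m(1)] m(2) unfolding pval_def pt_def by simp
      then show "eval g1 x = eval g2 x"
        using eval_cons_cancel[of c g1 g2 x] c C g1 g2 m hc q0 by auto
    qed
  next
    fix i i' l1 l2
    assume ii: "i < i'" "i' + t \<le> k"
      and l1: "l1 \<in> {c # g | c g. c \<in> C \<and> set g \<subseteq> carrier R \<and> length g = t}"
      and l2: "l2 \<in> {c # g | c g. c \<in> C \<and> set g \<subseteq> carrier R \<and> length g = t}"
      and e: "\<And>j. (i \<le> j \<and> j < i + t) \<or> (i' \<le> j \<and> j < i' + t) \<Longrightarrow> pval l1 (pt j) = pval l2 (pt j)"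
    define col where "col = (\<lambda>m. if m < t then i + m else if i' \<le> i + t then i + t else i')"
    have colW: "(i \<le> col m \<and> col m < i + t) \<or> (i' \<le> col m \<and> col m < i' + t)" if "m \<le> t" for m
      using that ii t unfolding col_def by auto
    have colmono: "col m1 < col m2 \<and> col m2 < col m1 + q" if "m1 < m2" "m2 \<le> t" for m1 m2
    proof -
      have "m1 < t" using that by simp
      then show ?thesis using that ii t unfolding col_def k_def by auto
    qed
    have inj: "inj_on (\<lambda>m. h (col m mod q)) {0..t}"
    proof (rule inj_onI)
      fix m1 m2 assume m: "m1 \<in> {0..t}" "m2 \<in> {0..t}" and eq: "h (col m1 mod q) = h (col m2 mod q)"
      then have eqm: "col m1 mod q = col m2 mod q" using hinj q0 unfolding inj_on_def by auto
      show "m1 = m2"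
      proof (rule ccontr)
        assume "m1 \<noteq> m2"
        then have "m1 < m2 \<or> m2 < m1" by auto
        then show False
        proof
          assume "m1 < m2" then show False using colmono[of m1 m2] m eqm mod_inj_window[of "col m1" "col m2" q] by auto
        next
          assume "m2 < m1" then show False using colmono[of m2 m1] m eqm mod_inj_window[of "col m2" "col m1" q] by auto
        qed
      qed
    qed
    define Xs where "Xs = (\<lambda>m. h (col m mod q)) ` {0..t}"
    have cardX: "card Xs = t + 1" unfolding Xs_def using card_image[OF inj] by simp
    have Xc: "Xs \<subseteq> carrier R" unfolding Xs_def using hc q0 by auto
    obtain c1 g1 where L1: "l1 = c1 # g1" "c1 \<in> C" "set g1 \<subseteq> carrier R" "length g1 = t" using l1 by auto
    obtain c2 g2 where L2: "l2 = c2 # g2" "c2 \<in> C" "set g2 \<subseteq> carrier R" "length g2 = t" using l2 by auto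
    show "l1 = l2"
    proof (rule eval_inj[OF _ _ _ _ Xc])
      show "length l1 = length l2" using L1 L2 by simp
      show "set l1 \<subseteq> carrier R" "set l2 \<subseteq> carrier R" using L1 L2 C by auto
      show "finite Xs" unfolding Xs_def by simp
      show "length l1 \<le> card Xs" using cardX L1 by simp
      fix x assume "x \<in> Xs"
      then obtain m where m: "m \<le> t" "x = h (col m mod q)" unfolding Xs_def by auto
      show "eval l1 x = eval l2 x" using e[OF colW[OF m(1)]] m(2) unfolding pval_def pt_def by simp
    qed
  qed
  then show ?thesis unfolding k_def .
qed

end

definition sq :: "nat \<Rightarrow> nat \<Rightarrow> nat" where
  "sq m j = (if j \<le> m then j mod m else (2 * (j - m)) mod m)"

lemma sq_explicit:
  assumes "j \<le> 2 * m" "0 < m"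
  shows "sq m j = (if j < m then j else if j = m then 0 else if j = 2 * m then 0
                   else if 2 * (j - m) < m then 2 * (j - m) else 2 * (j - m) - m)"
proof -
  have M: "a mod m = (if a < m then a else a - m)" if "a < 2 * m" for a
  proof (cases "a < m")
    case False
    then have "a mod m = (a - m) mod m" by (simp add: le_mod_geq)
    also have "\<dots> = a - m" using that False by (intro mod_less) linarith
    finally show ?thesis using False by simp
  qed simp
  show ?thesis
  proof (cases "j \<le> m")
    case True then show ?thesis using assms by (auto simp: sq_def)
  next
    case False
    show ?thesis
    proof (cases "j = 2 * m")
      case True then show ?thesis using False by (simp add: sq_def)
    next
      case F2: False
      then have "2 * (j - m) < 2 * m" using assms False by linarith
      then show ?thesis using False F2 M[of "2 * (j - m)"] by (simp add: sq_def)
    qed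
  qed
qed

lemma sq_lt: "0 < m \<Longrightarrow> sq m j < m"
  by (simp add: sq_def)

definition wrap :: "nat \<Rightarrow> nat \<Rightarrow> nat" where
  "wrap m a = (if a < m then a else a - m)"

lemma sq_low: "j < m \<Longrightarrow> sq m j = j"
  by (simp add: sq_def)

lemma sq_high:
  assumes "m \<le> j" "j < 2 * m" "0 < m"
  shows "sq m j = wrap m (2 * (j - m))"
  using sq_explicit[OF _ assms(3), of j] assms unfolding wrap_def by (auto split: if_splits)

lemma sq_step:
  assumes "5 \<le> m" "j < 2 * m"
  shows "sq m (Suc j) = wrap m (sq m j + (if j < m then 1 else 2))"
proof -
  have m0: "0 < m" using assms by simp
  show ?thesis
  proof (cases "j < m")
    case True
    then show ?thesis using sq_explicit[OF _ m0, of j] sq_explicit[OF _ m0, of "Suc j"] assms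
      by (auto simp: wrap_def)
  next
    case False
    show ?thesis
    proof (cases "j = m")
      case True
      then have "sq m j = 0" by (simp add: sq_def)
      moreover have "sq m (Suc j) = 2" using True assms by (simp add: sq_def)
      ultimately show ?thesis using True assms by (simp add: wrap_def)
    next
      case jm: False
      then have jm': "m < j" using False by simp
      have sj: "sq m j = wrap m (2 * (j - m))" using sq_high[OF _ assms(2) m0] jm' by simp
      show ?thesis
      proof (cases "Suc j = 2 * m")
        case True
        then have "sq m (Suc j) = 0" by (simp add: sq_def)
        moreover have "wrap m (2 * (j - m)) = m - 2"
        proof -
          have "2 * (j - m) = m + (m - 2)" using True assms by linarith
          moreover have "\<not> m + (m - 2) < m" using assms by linarith
          ultimately show ?thesis by (simp add: wrap_def)
        qed
        moreover have "wrap m (m - 2 + 2) = 0" using assms by (simp add: wrap_def)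
        ultimately show ?thesis using sj False by simp
      next
        case F2: False
        then have sj1: "sq m (Suc j) = wrap m (2 * (Suc j - m))" using sq_high[OF _ _ m0, of "Suc j"] jm' assms by simp
        have e: "2 * (Suc j - m) = 2 * (j - m) + 2" using jm' by simp
        have lt: "2 * (j - m) + 2 < 2 * m" using F2 assms by linarith
        show ?thesis
        proof (cases "2 * (j - m) < m")
          case True
          then show ?thesis using sj sj1 e False by (simp add: wrap_def)
        next
          case F3: False
          then have "wrap m (2 * (j - m)) = 2 * (j - m) - m" by (simp add: wrap_def)
          moreover have "2 * (j - m) - m + 2 < m" using lt F3 by linarith
          moreover have "\<not> 2 * (j - m) + 2 < m" using F3 by linarith
          moreover have "2 * (j - m) + 2 - m = 2 * (j - m) - m + 2" using F3 by linarith
          ultimately show ?thesis using sj sj1 e False by (simp add: wrap_def)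
        qed
      qed
    qed
  qed
qed

lemma wrap2:
  assumes "odd m" "a < b" "b < m"
  shows "wrap m (2 * a) \<noteq> wrap m (2 * b)"
proof -
  obtain r where r: "m = 2 * r + 1" using assms(1) oddE by blast
  show ?thesis
  proof (cases "2 * a < m")
    case True
    show ?thesis
    proof (cases "2 * b < m")
      case True
      then show ?thesis using \<open>2 * a < m\<close> assms by (simp add: wrap_def)
    next
      case False
      then have "wrap m (2 * b) = 2 * b - m" "wrap m (2 * a) = 2 * a" using \<open>2 * a < m\<close> by (auto simp: wrap_def)
      moreover have "2 * a \<noteq> 2 * b - m" using r False by presburger
      ultimately show ?thesis by simp
    qed
  next
    case False
    then have "\<not> 2 * b < m" using assms by simp
    then show ?thesis using False assms by (simp add: wrap_def)
  qed
qed

lemma sq_E1: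
  assumes "5 \<le> m" "j < 2 * m"
  shows "sq m j \<noteq> sq m (Suc j)"
proof -
  have "sq m j < m" using assms sq_lt by simp
  then show ?thesis using sq_step[OF assms] assms unfolding wrap_def by auto
qed

lemma sq_E2:
  assumes m5: "5 \<le> m" and odd: "odd m" and jj: "j < j'" "j' < 2 * m"
  shows "{sq m j, sq m (Suc j)} \<noteq> {sq m j', sq m (Suc j')}"
proof
  assume eq: "{sq m j, sq m (Suc j)} = {sq m j', sq m (Suc j')}"
  define s where "s = sq m j"
  define s' where "s' = sq m j'"
  define e where "e = (if j < m then 1 else (2::nat))"
  define e' where "e' = (if j' < m then 1 else (2::nat))"
  have m0: "0 < m" using m5 by simp
  have ss: "s < m" "s' < m" unfolding s_def s'_def using sq_lt m0 by auto
  have st: "sq m (Suc j) = wrap m (s + e)" unfolding s_def e_def using sq_step[OF m5] jj by simp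
  have st': "sq m (Suc j') = wrap m (s' + e')" unfolding s'_def e'_def using sq_step[OF m5] jj by simp
  have ee: "e \<in> {1, 2}" "e' \<in> {1, 2}" unfolding e_def e'_def by auto
  from eq have "(s = s' \<and> wrap m (s + e) = wrap m (s' + e')) \<or> (s = wrap m (s' + e') \<and> wrap m (s + e) = s')"
    unfolding s_def s'_def st st' by (auto simp: doubleton_eq_iff)
  then show False
  proof
    assume A: "s = s' \<and> wrap m (s + e) = wrap m (s' + e')"
    then have "e = e'" using ss ee m5 unfolding wrap_def by (auto split: if_splits)
    show False
    proof (cases "j' < m")
      case True
      then have "j < m" using jj by simp
      then show False using A True jj sq_low unfolding s_def s'_def by auto
    next
      case False
      then have "m \<le> j" using \<open>e = e'\<close> unfolding e_def e'_def by (auto split: if_splits)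
      then have "wrap m (2 * (j - m)) = wrap m (2 * (j' - m))"
        using A sq_high[OF _ _ m0, of j] sq_high[OF _ _ m0, of j'] jj False unfolding s_def s'_def by auto
      moreover have "j - m < j' - m" "j' - m < m" using jj \<open>m \<le> j\<close> by auto
      ultimately show False using wrap2[OF odd] by blast
    qed
  next
    assume B: "s = wrap m (s' + e') \<and> wrap m (s + e) = s'"
    have e12: "1 \<le> e" "e \<le> 2" "1 \<le> e'" "e' \<le> 2" using ee by auto
    have B1: "s = (if s' + e' < m then s' + e' else s' + e' - m)" using conjunct1[OF B] by (simp only: wrap_def)
    have B2: "s' = (if s + e < m then s + e else s + e - m)" using conjunct2[OF B, symmetric] by (simp only: wrap_def)
    show False
    proof (cases "s + e < m")
      case True
      then have s': "s' = s + e" using B2 by (simp only: if_P if_True)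
      show False
      proof (cases "s' + e' < m")
        case True then have "s = s' + e'" using B1 by (simp only: if_P if_True)
        then show False using s' e12 by linarith
      next
        case False then have "s = s' + e' - m" using B1 by (simp only: if_not_P if_False)
        then show False using s' e12 ss m5 False by linarith
      qed
    next
      case False
      then have s': "s' = s + e - m" using B2 by (simp only: if_not_P if_False)
      show False
      proof (cases "s' + e' < m")
        case True then have "s = s' + e'" using B1 by (simp only: if_P if_True)
        then show False using s' e12 ss m5 False by linarith
      next
        case F2: False then have "s = s' + e' - m" using B1 by (simp only: if_not_P if_False)
        then show False using s' e12 ss m5 False F2 by linarith
      qed
    qed
  qed
qed


lemma len2E: "length xs = 2 \<Longrightarrow> \<exists>a b. xs = [a, b]"
  by (metis One_nat_def Suc_1 length_0_conv length_Suc_conv)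

context field begin

lemma eval3:
  assumes "a \<in> carrier R" "b \<in> carrier R" "c \<in> carrier R" "x \<in> carrier R"
  shows "eval [c, a, b] x = c \<otimes> (x \<otimes> x) \<oplus> a \<otimes> x \<oplus> b"
proof -
  have "x [^] (2::nat) = x \<otimes> x" using assms by (simp add: numeral_2_eq_2)
  then show ?thesis using assms by (simp add: a_assoc)
qed

lemma two_pts_aux:
  assumes c: "c \<in> carrier R" and y: "y \<in> carrier R"
    and g: "set [a1, b1] \<subseteq> carrier R" "set [a2, b2] \<subseteq> carrier R"
    and e1: "pval [c, a1, b1] None = pval [c, a2, b2] None"
    and e2: "pval [c, a1, b1] (Some y) = pval [c, a2, b2] (Some y)"
  shows "[a1, b1] = [a2, b2]"
proof -
  have a: "a1 = a2" using e1 by (simp add: pval_def)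
  have "c \<otimes> (y \<otimes> y) \<oplus> a1 \<otimes> y \<oplus> b1 = c \<otimes> (y \<otimes> y) \<oplus> a1 \<otimes> y \<oplus> b2"
    using e2 a eval3 c y g by (simp add: pval_def)
  then have "b1 = b2" using c y g by (metis add.l_cancel a_closed m_closed list.set_intros insert_subset list.simps(15))
  then show ?thesis using a by simp
qed

lemma two_pts:
  assumes P: "P1 \<noteq> P2" "\<And>x. P1 = Some x \<Longrightarrow> x \<in> carrier R" "\<And>x. P2 = Some x \<Longrightarrow> x \<in> carrier R"
    and c: "c \<in> carrier R"
    and g1: "set g1 \<subseteq> carrier R" "length g1 = 2" and g2: "set g2 \<subseteq> carrier R" "length g2 = 2"
    and e1: "pval (c # g1) P1 = pval (c # g2) P1" and e2: "pval (c # g1) P2 = pval (c # g2) P2"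
  shows "g1 = g2"
proof -
  obtain a1 b1 where G1: "g1 = [a1, b1]" using len2E[OF g1(2)] by blast
  obtain a2 b2 where G2: "g2 = [a2, b2]" using len2E[OF g2(2)] by blast
  show ?thesis
  proof (cases P1)
    case None
    then obtain y where y: "P2 = Some y" using P(1) by (cases P2) auto
    then show ?thesis using two_pts_aux[OF c P(3)[OF y]] e1 e2 None g1 g2 G1 G2 by simp
  next
    case (Some x)
    note x = this
    show ?thesis
    proof (cases P2)
      case None
      then show ?thesis using two_pts_aux[OF c P(2)[OF x]] e1 e2 x g1 g2 G1 G2 by simp
    next
      case (Some y)
      have xy: "x \<noteq> y" using x Some P(1) by simp
      have xc: "x \<in> carrier R" and yc: "y \<in> carrier R" using P x Some by auto
      show ?thesis
      proof (rule eval_inj[of g1 g2 "{x, y}"])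
        show "length g1 = length g2" using g1 g2 by simp
        show "set g1 \<subseteq> carrier R" "set g2 \<subseteq> carrier R" using g1 g2 by auto
        show "finite {x, y}" "{x, y} \<subseteq> carrier R" using xc yc by auto
        show "length g1 \<le> card {x, y}" using xy g1 by simp
        fix z assume "z \<in> {x, y}"
        then have z: "z \<in> carrier R" "eval (c # g1) z = eval (c # g2) z"
          using e1 e2 x Some xc yc unfolding pval_def by auto
        show "eval g1 z = eval g2 z" using eval_cons_cancel[OF c g1(1) g2(1) _ z(1) z(2)] g1 g2 by simp
      qed
    qed
  qed
qed

lemma char2_double:
  assumes ch: "[(2::nat)] \<cdot> \<one> = \<zero>" and z: "z \<in> carrier R"
  shows "z \<oplus> z = \<zero>"
proof -
  have "[(2::nat)] \<cdot> z = \<zero>" using charp_mult_zero[OF ch z] by simp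
  moreover have "[(2::nat)] \<cdot> z = z \<oplus> z" using z by (simp add: numeral_2_eq_2)
  ultimately show ?thesis by simp
qed

lemma three_aux:
  assumes ch: "[(2::nat)] \<cdot> \<one> = \<zero>"
    and cs: "c1 \<in> carrier R" "a \<in> carrier R" "b1 \<in> carrier R" "c2 \<in> carrier R" "b2 \<in> carrier R"
    and bg: "\<beta> \<in> carrier R" "\<gamma> \<in> carrier R" "\<beta> \<noteq> \<gamma>"
    and eb: "eval [c1, a, b1] \<beta> = eval [c2, a, b2] \<beta>"
    and eg: "eval [c1, a, b1] \<gamma> = eval [c2, a, b2] \<gamma>"
  shows "c1 = c2 \<and> b1 = b2"
proof -
  have F: "c1 \<otimes> (x \<otimes> x) \<oplus> b1 = c2 \<otimes> (x \<otimes> x) \<oplus> b2" if x: "x \<in> carrier R"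
    and e: "eval [c1, a, b1] x = eval [c2, a, b2] x" for x
  proof -
    have "a \<otimes> x \<oplus> (c1 \<otimes> (x \<otimes> x) \<oplus> b1) = c1 \<otimes> (x \<otimes> x) \<oplus> a \<otimes> x \<oplus> b1"
      using cs x by algebra
    also have "\<dots> = c2 \<otimes> (x \<otimes> x) \<oplus> a \<otimes> x \<oplus> b2" using e eval3 cs x by simp
    also have "\<dots> = a \<otimes> x \<oplus> (c2 \<otimes> (x \<otimes> x) \<oplus> b2)" using cs x by algebra
    finally show ?thesis using cs x by (metis add.l_cancel a_closed m_closed)
  qed
  have Fb: "c1 \<otimes> (\<beta> \<otimes> \<beta>) \<oplus> b1 = c2 \<otimes> (\<beta> \<otimes> \<beta>) \<oplus> b2" using F bg eb by simp
  have Fg: "c1 \<otimes> (\<gamma> \<otimes> \<gamma>) \<oplus> b1 = c2 \<otimes> (\<gamma> \<otimes> \<gamma>) \<oplus> b2" using F bg eg by simp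
  have "(c1 \<ominus> c2) \<otimes> (\<beta> \<otimes> \<beta> \<ominus> \<gamma> \<otimes> \<gamma>) =
        (c1 \<otimes> (\<beta> \<otimes> \<beta>) \<oplus> b1) \<ominus> (c1 \<otimes> (\<gamma> \<otimes> \<gamma>) \<oplus> b1) \<ominus>
        ((c2 \<otimes> (\<beta> \<otimes> \<beta>) \<oplus> b2) \<ominus> (c2 \<otimes> (\<gamma> \<otimes> \<gamma>) \<oplus> b2))"
    using cs bg by algebra
  also have "\<dots> = \<zero>" using Fb Fg cs bg by simp
  finally have prod0: "(c1 \<ominus> c2) \<otimes> (\<beta> \<otimes> \<beta> \<ominus> \<gamma> \<otimes> \<gamma>) = \<zero>" .
  have "\<beta> \<otimes> \<beta> \<ominus> \<gamma> \<otimes> \<gamma> \<noteq> \<zero>"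
  proof
    assume sq0: "\<beta> \<otimes> \<beta> \<ominus> \<gamma> \<otimes> \<gamma> = \<zero>"
    have "(\<beta> \<ominus> \<gamma>) \<otimes> (\<beta> \<ominus> \<gamma>) = (\<beta> \<otimes> \<beta> \<ominus> \<gamma> \<otimes> \<gamma>) \<oplus> (\<gamma> \<otimes> \<gamma> \<oplus> \<gamma> \<otimes> \<gamma>) \<ominus> (\<beta> \<otimes> \<gamma> \<oplus> \<beta> \<otimes> \<gamma>)"
      using bg by algebra
    also have "\<dots> = \<zero>" using sq0 char2_double[OF ch] bg by simp
    finally have "\<beta> \<ominus> \<gamma> = \<zero>" using bg integral by blast
    then show False using bg by simp
  qed
  then have "c1 \<ominus> c2 = \<zero>" using prod0 integral cs bg by blast
  then have c: "c1 = c2" using cs by simp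
  then have "b1 = b2" using Fb cs bg by (metis add.l_cancel m_closed)
  then show ?thesis using c by simp
qed

lemma three_none:
  assumes ch: "[(2::nat)] \<cdot> \<one> = \<zero>"
    and l1: "set l1 \<subseteq> carrier R" "length l1 = 3" and l2: "set l2 \<subseteq> carrier R" "length l2 = 3"
    and bg: "\<beta> \<in> carrier R" "\<gamma> \<in> carrier R" "\<beta> \<noteq> \<gamma>"
    and e0: "pval l1 None = pval l2 None"
    and eb: "pval l1 (Some \<beta>) = pval l2 (Some \<beta>)"
    and eg: "pval l1 (Some \<gamma>) = pval l2 (Some \<gamma>)"
  shows "l1 = l2"
proof -
  obtain c1 g1 where L1: "l1 = c1 # g1" using l1 by (cases l1) auto
  obtain a1 b1 where G1: "g1 = [a1, b1]" using len2E[of g1] l1 L1 by auto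
  obtain c2 g2 where L2: "l2 = c2 # g2" using l2 by (cases l2) auto
  obtain a2 b2 where G2: "g2 = [a2, b2]" using len2E[of g2] l2 L2 by auto
  have a: "a1 = a2" using e0 L1 L2 G1 G2 by (simp add: pval_def)
  have "c1 = c2 \<and> b1 = b2"
    using three_aux[OF ch _ _ _ _ _ bg, of c1 a1 b1 c2 b2] l1 l2 L1 L2 G1 G2 a eb eg
    by (simp add: pval_def)
  then show ?thesis using L1 L2 G1 G2 a by simp
qed

lemma three_pts:
  assumes ch: "[(2::nat)] \<cdot> \<one> = \<zero>"
    and P: "P1 \<noteq> P2" "P1 \<noteq> P3" "P2 \<noteq> P3"
    and Pc: "\<And>x. x \<in> set_option P1 \<union> set_option P2 \<union> set_option P3 \<Longrightarrow> x \<in> carrier R"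
    and l1: "set l1 \<subseteq> carrier R" "length l1 = 3" and l2: "set l2 \<subseteq> carrier R" "length l2 = 3"
    and e1: "pval l1 P1 = pval l2 P1" and e2: "pval l1 P2 = pval l2 P2" and e3: "pval l1 P3 = pval l2 P3"
  shows "l1 = l2"
proof (cases "P1 = None \<or> P2 = None \<or> P3 = None")
  case True
  then show ?thesis
  proof (elim disjE)
    assume N: "P1 = None"
    then obtain \<beta> \<gamma> where "P2 = Some \<beta>" "P3 = Some \<gamma>" using P by (cases P2; cases P3) auto
    then show ?thesis using three_none[OF ch l1 l2, of \<beta> \<gamma>] N P Pc e1 e2 e3 by auto
  next
    assume N: "P2 = None"
    then obtain \<beta> \<gamma> where "P1 = Some \<beta>" "P3 = Some \<gamma>" using P by (cases P1; cases P3) auto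
    then show ?thesis using three_none[OF ch l1 l2, of \<beta> \<gamma>] N P Pc e1 e2 e3 by auto
  next
    assume N: "P3 = None"
    then obtain \<beta> \<gamma> where "P1 = Some \<beta>" "P2 = Some \<gamma>" using P by (cases P1; cases P2) auto
    then show ?thesis using three_none[OF ch l1 l2, of \<beta> \<gamma>] N P Pc e1 e2 e3 by auto
  qed
next
  case False
  then obtain x1 x2 x3 where X: "P1 = Some x1" "P2 = Some x2" "P3 = Some x3" by auto
  have xc: "{x1, x2, x3} \<subseteq> carrier R" using Pc X by auto
  have card: "card {x1, x2, x3} = 3" using P X by auto
  show ?thesis
  proof (rule eval_inj[OF _ l1(1) l2(1) _ xc])
    show "length l1 = length l2" using l1 l2 by simp
    show "finite {x1, x2, x3}" by simp
    show "length l1 \<le> card {x1, x2, x3}" using card l1 by simp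
    fix z assume "z \<in> {x1, x2, x3}"
    then show "eval l1 z = eval l2 z" using e1 e2 e3 X unfolding pval_def by auto
  qed
qed

end

context field begin

lemma part2:
  fixes q d :: nat
  assumes fin: "finite (carrier R)" and q: "card (carrier R) = q"
    and ch: "[(2::nat)] \<cdot> \<one> = \<zero>" and q4: "4 \<le> q" and ev: "even q" and d: "d < q"
  shows "\<exists>A. optimum_CDA d 2 ((d + 1) * q ^ 2) (2 * q + 3) q A"
proof -
  obtain h where h: "bij_betw h {0..<q} (carrier R)" using ex_bij_betw_nat_finite[OF fin] q by auto
  define enc where "enc = the_inv_into {0..<q} h"
  have enc: "bij_betw enc (carrier R) {0..<q}" unfolding enc_def by (rule bij_betw_the_inv_into[OF h])
  have hinj: "inj_on h {0..<q}" using h unfolding bij_betw_def by auto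
  have hc: "h y \<in> carrier R" if "y < q" for y using h that unfolding bij_betw_def by auto
  define C where "C = h ` {0..d}"
  have C: "C \<subseteq> carrier R" "card C = d + 1"
  proof -
    show "C \<subseteq> carrier R" unfolding C_def using hc d by auto
    have "inj_on h {0..d}" by (rule inj_on_subset[OF hinj]) (use d in auto)
    then show "card C = d + 1" unfolding C_def by (simp add: card_image)
  qed
  define m where "m = q + 1"
  have m5: "5 \<le> m" and modd: "odd m" using q4 ev unfolding m_def by auto
  define pt where "pt = (\<lambda>j. if sq m j = q then None else Some (h (sq m j)))"
  have sqle: "sq m j \<le> q" for j using sq_lt[of m j] unfolding m_def by simp
  have ptc: "\<And>j x. pt j = Some x \<Longrightarrow> x \<in> carrier R"
  proof -
    fix j x assume "pt j = Some x"
    then have "sq m j \<noteq> q" "x = h (sq m j)" unfolding pt_def by (auto split: if_splits)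
    then show "x \<in> carrier R" using hc sqle[of j] by simp
  qed
  have ptinj: "pt j1 \<noteq> pt j2" if "sq m j1 \<noteq> sq m j2" for j1 j2
  proof
    assume eq: "pt j1 = pt j2"
    show False
    proof (cases "sq m j1 = q")
      case True
      then have "sq m j2 = q" using eq unfolding pt_def by (auto split: if_splits)
      then show False using True that by simp
    next
      case False
      then have "sq m j2 \<noteq> q" using eq unfolding pt_def by (auto split: if_splits)
      then have "h (sq m j1) = h (sq m j2)" using eq False unfolding pt_def by simp
      moreover have "sq m j1 < q" "sq m j2 < q" using False \<open>sq m j2 \<noteq> q\<close> sqle by (auto simp: le_less)
      ultimately show False using hinj that unfolding inj_on_def by auto
    qed
  qed
  have ptc': "x \<in> carrier R" if "x \<in> set_option (pt j)" for x j using ptc that by auto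
  define k where "k = 2 * q + 3"
  have k: "k = 2 * m + 1" unfolding k_def m_def by simp
  have t: "(0::nat) < 2" by simp
  have "\<exists>A. optimum_CDA d 2 ((d + 1) * q ^ 2) k q A"
  proof (rule assembly[OF fin enc C t ptc])
    fix i c g1 g2
    assume it: "i + 2 \<le> k" and c: "c \<in> C" and g1: "set g1 \<subseteq> carrier R" "length g1 = 2"
      and g2: "set g2 \<subseteq> carrier R" "length g2 = 2"
      and e: "\<And>ma. ma < 2 \<Longrightarrow> pval (c # g1) (pt (i + ma)) = pval (c # g2) (pt (i + ma))"
    have i: "i < 2 * m" using it k by simp
    have "pt i \<noteq> pt (Suc i)" using ptinj sq_E1[OF m5 i] by blast
    then show "g1 = g2"
      using two_pts[of "pt i" "pt (Suc i)" c g1 g2] ptc c C g1 g2 e[of 0] e[of 1] by auto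
  next
    fix i i' l1 l2
    assume ii: "i < i'" "i' + 2 \<le> k"
      and l1: "l1 \<in> {c # g | c g. c \<in> C \<and> set g \<subseteq> carrier R \<and> length g = 2}"
      and l2: "l2 \<in> {c # g | c g. c \<in> C \<and> set g \<subseteq> carrier R \<and> length g = 2}"
      and e: "\<And>j. (i \<le> j \<and> j < i + 2) \<or> (i' \<le> j \<and> j < i' + 2) \<Longrightarrow> pval l1 (pt j) = pval l2 (pt j)"
    have i': "i' < 2 * m" using ii k by simp
    have l1c: "set l1 \<subseteq> carrier R" "length l1 = 3" using l1 C by auto
    have l2c: "set l2 \<subseteq> carrier R" "length l2 = 3" using l2 C by auto
    have E1a: "sq m i \<noteq> sq m (Suc i)" using sq_E1[OF m5] ii i' by simp
    have E1b: "sq m i' \<noteq> sq m (Suc i')" using sq_E1[OF m5 i'] .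
    have E2: "{sq m i, sq m (Suc i)} \<noteq> {sq m i', sq m (Suc i')}" using sq_E2[OF m5 modd ii(1) i'] .
    obtain j3 where j3: "j3 = i' \<or> j3 = Suc i'" "sq m j3 \<noteq> sq m i" "sq m j3 \<noteq> sq m (Suc i)"
    proof (cases "sq m i' \<in> {sq m i, sq m (Suc i)}")
      case False then show ?thesis using that by auto
    next
      case True
      have "sq m (Suc i') \<notin> {sq m i, sq m (Suc i)}"
      proof
        assume "sq m (Suc i') \<in> {sq m i, sq m (Suc i)}"
        then have "{sq m i', sq m (Suc i')} = {sq m i, sq m (Suc i)}" using True E1a E1b by auto
        then show False using E2 by simp
      qed
      then show ?thesis using that by auto
    qed
    have w: "(i \<le> j \<and> j < i + 2) \<or> (i' \<le> j \<and> j < i' + 2)" if "j \<in> {i, Suc i, j3}" for j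
      using that j3(1) by auto
    show "l1 = l2"
    proof (rule three_pts[OF ch _ _ _ _ l1c l2c])
      show "pt i \<noteq> pt (Suc i)" "pt i \<noteq> pt j3" "pt (Suc i) \<noteq> pt j3"
        using ptinj E1a j3 by auto
      show "\<And>x. x \<in> set_option (pt i) \<union> set_option (pt (Suc i)) \<union> set_option (pt j3) \<Longrightarrow> x \<in> carrier R"
        using ptc' by blast
      show "pval l1 (pt i) = pval l2 (pt i)" using e w by simp
      show "pval l1 (pt (Suc i)) = pval l2 (pt (Suc i))" using e w by simp
      show "pval l1 (pt j3) = pval l2 (pt j3)" using e w by simp
    qed
  qed
  then show ?thesis unfolding k_def .
qed

end

theorem mainTheorem9:
  fixes q :: nat
  assumes "prime_power q"
  shows "(\<forall>d t. 0 < d \<and> 0 < t \<and> d < q \<and> t + 1 < q \<longrightarrow>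
            (\<exists>A. optimum_CDA d t ((d + 1) * q ^ t) (q + t - 1) q A))
       \<and> (q \<ge> 4 \<and> (\<exists>n. q = 2 ^ n) \<longrightarrow>
            (\<forall>d. 0 < d \<and> d < q \<longrightarrow>
               (\<exists>A. optimum_CDA d 2 ((d + 1) * q ^ 2) (2 * q + 3) q A)))"
proof -
  obtain p n where p: "prime p" and n: "n > 0" and qp: "q = p ^ n"
    using assms unfolding prime_power_def by blast
  obtain F :: "((int list \<times> nat) multiset \<Rightarrow> int) ring" where
    F: "field F" "finite (carrier F)" "card (carrier F) = p ^ n" "[p] \<cdot>\<^bsub>F\<^esub> \<one>\<^bsub>F\<^esub> = \<zero>\<^bsub>F\<^esub>"
    using GF_exists[OF p n] by blast
  interpret F: field F by (rule F(1))
  have cq: "card (carrier F) = q" using F(3) qp by simp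
  show ?thesis
  proof (intro conjI impI allI)
    fix d t :: nat
    assume a: "0 < d \<and> 0 < t \<and> d < q \<and> t + 1 < q"
    show "\<exists>A. optimum_CDA d t ((d + 1) * q ^ t) (q + t - 1) q A"
      using F.part1[OF F(2) cq] a by blast
  next
    fix d :: nat
    assume a: "4 \<le> q \<and> (\<exists>n. q = 2 ^ n)" and b: "0 < d \<and> d < q"
    obtain n' where n': "q = 2 ^ n'" using a by blast
    have "p dvd q" using qp n by (simp add: dvd_power)
    then have "p dvd 2 ^ n'" using n' by simp
    then have "p dvd 2" using p prime_dvd_power by blast
    then have p2: "p = 2" using dvd_imp_le[of p 2] prime_gt_1_nat[OF p] by simp
    have ch: "[(2::nat)] \<cdot>\<^bsub>F\<^esub> \<one>\<^bsub>F\<^esub> = \<zero>\<^bsub>F\<^esub>" using F(4) p2 by simp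
    have ev: "even q" using n' a by (cases n') auto
    show "\<exists>A. optimum_CDA d 2 ((d + 1) * q ^ 2) (2 * q + 3) q A"
      using F.part2[OF F(2) cq ch _ ev] a b by blast
  qed
qed

end
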